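(* Let $X\in\mathbb{R}^{d\times d}$ with $X+X^\top$ positive definite, $\gamma\in(0,1)$, $\gamma_k=(k+1)^{-\gamma}$ for $k\ge0$. Let $q=\lambda_{\min}(X+X^\top)/4$, $\mu=-\lambda_{\min}(X+X^\top)+\lambda_{\max}(X^\top X)$, $K=\big\lceil\big(\lambda_{\max}(X^\top X)/(\lambda_{\min}(X+X^\top)-2q)\big)^{1/\gamma}\big\rceil$, and $$C=\max\Big\{1,\ \sqrt{\max_{0\le\ell_1\le\ell_2\le K}\prod_{\ell=\ell_1}^{\ell_2}e^{\gamma_\ell(\mu+2q)}}\Big\}.$$ Then for all integers $0\le i\le n$, $$\prod_{k=i}^{n}\|I-\gamma_kX\|\le C\,e^{-q\sum_{k=i}^n\gamma_k}.$$
   Context: $\|\cdot\|$ is the spectral norm; $\lambda_{\min},\lambda_{\max}$ denote smallest and largest eigenvalues. *)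

theory Defs
  imports "HOL-Analysis.Analysis"
begin

definition real_eigenvalues :: "real^'n^'n \<Rightarrow> real set" where
  "real_eigenvalues A = {l. \<exists>v. v \<noteq> 0 \<and> A *v v = l *\<^sub>R v}"

text \<open>Smallest / largest eigenvalue (used for symmetric matrices, whose eigenvalues are real).\<close>
definition lambda_min :: "real^'n^'n \<Rightarrow> real" where
  "lambda_min A = Min (real_eigenvalues A)"

definition lambda_max :: "real^'n^'n \<Rightarrow> real" where
  "lambda_max A = Max (real_eigenvalues A)"

definition pos_def :: "real^'n^'n \<Rightarrow> bool" where
  "pos_def A \<longleftrightarrow> (\<forall>v. v \<noteq> 0 \<longrightarrow> v \<bullet> (A *v v) > 0)"

definition spec_norm :: "real^'n^'n \<Rightarrow> real" where
  "spec_norm A = onorm (\<lambda>v. A *v v)"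

end

theory Submission
  imports Defs
begin

lemma sym_inner:
  fixes A :: "real^'n^'n"
  assumes "transpose A = A"
  shows "(A *v x) \<bullet> y = x \<bullet> (A *v y)"
proof -
  have "A *v x = x v* A" using assms by (metis vector_transpose_matrix)
  then show ?thesis by (simp add: dot_lmul_matrix)
qed

lemma sym_eig_finite:
  fixes A :: "real^'n^'n"
  assumes sym: "transpose A = A"
  shows "finite (real_eigenvalues A)"
proof -
  define E where "E = real_eigenvalues A"
  define e where "e l = (SOME v. v \<noteq> 0 \<and> A *v v = l *\<^sub>R v)" for l
  have e: "e l \<noteq> 0 \<and> A *v e l = l *\<^sub>R e l" if "l \<in> E" for l
    using that unfolding E_def real_eigenvalues_def e_def by (metis (mono_tags, lifting) someI_ex mem_Collect_eq)
  have inj: "inj_on e E"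
  proof (rule inj_onI)
    fix l l' assume l: "l \<in> E" "l' \<in> E" "e l = e l'"
    then have "l *\<^sub>R e l = l' *\<^sub>R e l" using e by metis
    then show "l = l'" using e[OF l(1)] by simp
  qed
  have "pairwise orthogonal (e ` E)"
  proof (clarsimp simp: pairwise_def)
    fix l l' assume l: "l \<in> E" "l' \<in> E" "e l \<noteq> e l'"
    then have ne: "l \<noteq> l'" by auto
    have "(A *v e l) \<bullet> e l' = e l \<bullet> (A *v e l')" by (rule sym_inner[OF sym])
    then have "l * (e l \<bullet> e l') = l' * (e l \<bullet> e l')" using e[OF l(1)] e[OF l(2)] by simp
    then show "orthogonal (e l) (e l')" using ne by (simp add: orthogonal_def)
  qed
  moreover have "0 \<notin> e ` E" using e by auto
  ultimately have "independent (e ` E)" by (rule pairwise_orthogonal_independent)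
  then have "finite (e ` E)" using independent_bound by blast
  then show ?thesis using inj finite_imageD E_def by blast
qed

lemma rayleigh_min:
  fixes A :: "real^'n^'n"
  assumes sym: "transpose A = A"
  shows "\<exists>m \<in> real_eigenvalues A. \<forall>v. m * (v \<bullet> v) \<le> v \<bullet> (A *v v)"
proof -
  let ?f = "\<lambda>v. v \<bullet> (A *v v)"
  have "axis undefined (1::real) \<in> sphere (0::real^'n) 1"
    by (simp add: norm_axis_1)
  then have "sphere (0::real^'n) 1 \<noteq> {}" by blast
  moreover have "continuous_on (sphere 0 1) ?f"
    by (intro continuous_intros)
  ultimately obtain v0 where v0: "v0 \<in> sphere 0 1" and mn: "\<And>y. y \<in> sphere 0 1 \<Longrightarrow> ?f v0 \<le> ?f y"
    using continuous_attains_inf[OF compact_sphere] by blast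
  define m where "m = ?f v0"
  have nv0: "norm v0 = 1" using v0 by simp
  have vv0: "v0 \<bullet> v0 = 1" using nv0 by (simp add: norm_eq_1)
  have ineq: "m * (v \<bullet> v) \<le> ?f v" for v
  proof (cases "v = 0")
    case True then show ?thesis by simp
  next
    case False
    let ?u = "v /\<^sub>R norm v"
    have "?u \<in> sphere 0 1" using False by simp
    then have "m \<le> ?f ?u" using mn m_def by blast
    also have "?f ?u = ?f v / (norm v)^2"
      by (simp add: matrix_vector_mult_scaleR power2_eq_square divide_simps)
    finally have "m * (norm v)^2 \<le> ?f v" using False by (simp add: divide_simps)
    then show ?thesis by (simp add: power2_norm_eq_inner)
  qed
  define r where "r = A *v v0 - m *\<^sub>R v0"
  have key: "\<forall>t. 0 \<le> 2 * t * (w \<bullet> r) + t^2 * (?f w - m * (w \<bullet> w))" for w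
  proof
    fix t
    have "0 \<le> ?f (v0 + t *\<^sub>R w) - m * ((v0 + t *\<^sub>R w) \<bullet> (v0 + t *\<^sub>R w))" using ineq[of "v0 + t *\<^sub>R w"] by simp
    also have "\<dots> = 2 * t * (w \<bullet> r) + t^2 * (?f w - m * (w \<bullet> w))"
    proof -
      have s: "v0 \<bullet> (A *v w) = w \<bullet> (A *v v0)" using sym_inner[OF sym, of w v0] by (simp add: inner_commute)
      show ?thesis unfolding r_def
        by (simp add: algebra_simps inner_add_left inner_add_right inner_diff_right s vv0 m_def power2_eq_square inner_commute[of v0 w])
    qed
    finally show "0 \<le> 2 * t * (w \<bullet> r) + t^2 * (?f w - m * (w \<bullet> w))" .
  qed
  have "r \<bullet> r = 0"
  proof -
    define a where "a = r \<bullet> r"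
    define b where "b = ?f r - m * (r \<bullet> r)"
    define s where "s = 1 / (\<bar>b\<bar> + 1)"
    have sp: "s > 0" "s * b < 2" unfolding s_def by (auto simp: divide_simps)
    have "0 \<le> 2 * (-s*a) * a + (-s*a)^2 * b" using key[of r] a_def b_def by metis
    then have "0 \<le> s * a^2 * (s * b - 2)" by (simp add: algebra_simps power2_eq_square)
    moreover have "s * a^2 * (s * b - 2) \<le> 0"
      using sp by (intro mult_nonneg_nonpos) auto
    ultimately have "s * a^2 * (s * b - 2) = 0" by linarith
    then show ?thesis using sp a_def by simp
  qed
  then have "A *v v0 = m *\<^sub>R v0" using r_def by simp
  moreover have "v0 \<noteq> 0" using nv0 by auto
  ultimately have "m \<in> real_eigenvalues A" unfolding real_eigenvalues_def by blast
  then show ?thesis using ineq by blast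
qed

lemma rayleigh_max:
  fixes A :: "real^'n^'n"
  assumes sym: "transpose A = A"
  shows "\<exists>M \<in> real_eigenvalues A. \<forall>v. v \<bullet> (A *v v) \<le> M * (v \<bullet> v)"
proof -
  have neg: "(-A) *v v = - (A *v v)" for v :: "real^'n"
    by (simp add: matrix_vector_mult_def vec_eq_iff sum_negf)
  have "transpose (-A) = -A" using sym by (metis (no_types, lifting) transpose_def vec_eq_iff vector_uminus_component vec_lambda_beta)
  from rayleigh_min[OF this] obtain m where m: "m \<in> real_eigenvalues (-A)" "\<forall>v. m * (v \<bullet> v) \<le> v \<bullet> ((-A) *v v)" by blast
  from m(1) obtain u where "u \<noteq> 0" "(-A) *v u = m *\<^sub>R u" unfolding real_eigenvalues_def by blast
  then have "A *v u = (-m) *\<^sub>R u" using neg by (metis minus_minus scaleR_minus_left)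
  then have "-m \<in> real_eigenvalues A" using \<open>u \<noteq> 0\<close> unfolding real_eigenvalues_def by blast
  moreover have "\<forall>v. v \<bullet> (A *v v) \<le> (-m) * (v \<bullet> v)" using m(2) neg by (simp add: inner_minus_right) (smt (verit))
  ultimately show ?thesis by blast
qed

theorem mainTheorem7:
  fixes X :: "real^'n^'n" and \<gamma> :: real
    and gs :: "nat \<Rightarrow> real" and q \<mu> C :: real and K :: nat
  assumes pd: "pos_def (X + transpose X)"
    and g: "0 < \<gamma>" "\<gamma> < 1"
    and gs_def: "\<And>k. gs k = (real k + 1) powr (- \<gamma>)"
    and q_def: "q = lambda_min (X + transpose X) / 4"
    and mu_def: "\<mu> = - lambda_min (X + transpose X) + lambda_max (transpose X ** X)"
    and K_def: "K = nat \<lceil>(lambda_max (transpose X ** X) / (lambda_min (X + transpose X) - 2 * q)) powr (1 / \<gamma>)\<rceil>"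
    and C_def: "C = max 1 (sqrt (Max {(\<Prod>l=l1..l2. exp (gs l * (\<mu> + 2 * q))) | l1 l2. l1 \<le> l2 \<and> l2 \<le> K}))"
  shows "\<forall>i n. i \<le> n \<longrightarrow>
    (\<Prod>k=i..n. spec_norm (mat 1 - gs k *\<^sub>R X)) \<le> C * exp (- q * (\<Sum>k=i..n. gs k))"
proof -
  define Am where "Am = X + transpose X"
  define B where "B = transpose X ** X"
  define lam where "lam = lambda_min Am"
  define Lam where "Lam = lambda_max B"
  have symA: "transpose Am = Am" unfolding Am_def by (simp add: transpose_def vec_eq_iff add.commute)
  have symB: "transpose B = B" unfolding B_def by (simp add: matrix_transpose_mul)
  have quadB: "v \<bullet> (B *v v) = (X *v v) \<bullet> (X *v v)" for v
  proof -
    have "B *v v = transpose X *v (X *v v)" unfolding B_def by (simp add: matrix_vector_mul_assoc)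
    then show ?thesis by (simp add: inner_commute[of v] dot_lmul_matrix)
  qed
  have quadA: "v \<bullet> (Am *v v) = 2 * (v \<bullet> (X *v v))" for v
  proof -
    have "Am *v v = X *v v + (v v* X)" unfolding Am_def by (simp add: matrix_vector_mult_add_rdistrib)
    then show ?thesis by (simp add: inner_add_right inner_commute[of v "v v* X"] dot_lmul_matrix)
  qed
  obtain m where m: "m \<in> real_eigenvalues Am" "\<forall>v. m * (v \<bullet> v) \<le> v \<bullet> (Am *v v)"
    using rayleigh_min[OF symA] by blast
  have finA: "finite (real_eigenvalues Am)" by (rule sym_eig_finite[OF symA])
  have lam_le: "lam \<le> m" unfolding lam_def lambda_min_def using finA m(1) by simp
  have "lam \<in> real_eigenvalues Am" unfolding lam_def lambda_min_def using finA m(1) by (intro Min_in) auto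
  then obtain u where u: "u \<noteq> 0" "Am *v u = lam *\<^sub>R u" unfolding real_eigenvalues_def by blast
  have "u \<bullet> (Am *v u) > 0" using pd u(1) unfolding pos_def_def Am_def by blast
  then have "lam * (u \<bullet> u) > 0" using u(2) by simp
  moreover have "u \<bullet> u > 0" using u(1) by simp
  ultimately have lam_pos: "lam > 0" by (simp add: zero_less_mult_iff)
  obtain M where M: "M \<in> real_eigenvalues B" "\<forall>v. v \<bullet> (B *v v) \<le> M * (v \<bullet> v)"
    using rayleigh_max[OF symB] by blast
  have finB: "finite (real_eigenvalues B)" by (rule sym_eig_finite[OF symB])
  have M_le: "M \<le> Lam" unfolding Lam_def lambda_max_def using finB M(1) by simp
  obtain w where w: "w \<noteq> 0" "B *v w = M *\<^sub>R w" using M(1) unfolding real_eigenvalues_def by blast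
  have "M * (w \<bullet> w) \<ge> 0" using quadB[of w] w(2) by simp
  moreover have "w \<bullet> w > 0" using w(1) by simp
  ultimately have "M \<ge> 0" by (simp add: zero_le_mult_iff)
  then have Lam_nn: "Lam \<ge> 0" using M_le by simp
  have vv: "v \<bullet> v \<ge> 0" for v :: "real^'n" by simp
  have qA: "lam * (v \<bullet> v) \<le> 2 * (v \<bullet> (X *v v))" for v
    using m(2) lam_le quadA[of v] mult_right_mono[OF lam_le vv[of v]] by (metis order_trans)
  have qB: "(X *v v) \<bullet> (X *v v) \<le> Lam * (v \<bullet> v)" for v
    using M(2) quadB[of v] mult_right_mono[OF M_le vv[of v]] by (metis order_trans)
  have nb: "spec_norm (mat 1 - g *\<^sub>R X) \<le> exp ((- g * lam + g^2 * Lam) / 2)" if g0: "g \<ge> 0" for g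
    unfolding spec_norm_def
  proof (rule onorm_le)
    fix v :: "real^'n"
    define x where "x = - g * lam + g^2 * Lam"
    have eq: "(mat 1 - g *\<^sub>R X) *v v = v - g *\<^sub>R (X *v v)"
      by (simp add: matrix_vector_mult_diff_rdistrib scaleR_matrix_vector_assoc)
    have "(norm (v - g *\<^sub>R (X *v v)))^2 = v \<bullet> v - g * (2 * (v \<bullet> (X *v v))) + g^2 * ((X *v v) \<bullet> (X *v v))"
      unfolding power2_norm_eq_inner by (simp add: inner_diff_left inner_diff_right inner_commute[of "X *v v" v] algebra_simps power2_eq_square)
    also have "\<dots> \<le> v \<bullet> v - g * (lam * (v \<bullet> v)) + g^2 * (Lam * (v \<bullet> v))"
    proof -
      have "g * (lam * (v \<bullet> v)) \<le> g * (2 * (v \<bullet> (X *v v)))" using qA[of v] g0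
        by (rule mult_left_mono)
      moreover have "g^2 * ((X *v v) \<bullet> (X *v v)) \<le> g^2 * (Lam * (v \<bullet> v))" using qB[of v] by (simp add: mult_left_mono)
      ultimately show ?thesis by linarith
    qed
    also have "\<dots> = (1 + x) * (v \<bullet> v)" unfolding x_def by (simp add: algebra_simps)
    also have "\<dots> \<le> exp x * (v \<bullet> v)" using exp_ge_add_one_self[of x] by (simp add: mult_right_mono add.commute)
    also have "\<dots> = (exp (x/2) * norm v)^2"
    proof -
      have "exp x = (exp (x/2))^2" by (simp add: power2_eq_square flip: exp_add)
      then show ?thesis by (simp add: power_mult_distrib power2_norm_eq_inner)
    qed
    finally show "norm ((mat 1 - g *\<^sub>R X) *v v) \<le> exp ((- g * lam + g^2 * Lam) / 2) * norm v"
      unfolding eq x_def by (rule power2_le_imp_le) simp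
  qed
  have qlam: "q = lam / 4" unfolding q_def lam_def Am_def ..
  have mu': "\<mu> + 2 * q = Lam - lam / 2" unfolding mu_def Lam_def lam_def Am_def B_def qlam by simp
  have gpos: "gs k > 0" for k unfolding gs_def by simp
  have gle1: "gs k \<le> 1" for k
  proof -
    have "(real k + 1) powr \<gamma> \<ge> 1" using g by (intro ge_one_powr_ge_zero) auto
    then show ?thesis unfolding gs_def powr_minus by (simp add: inverse_le_1_iff)
  qed
  define e where "e k = gs k ^2 * Lam / 2 - q * gs k" for k
  have bexp: "exp ((- gs k * lam + (gs k)^2 * Lam) / 2) = exp (- q * gs k + e k)" for k
    unfolding e_def qlam by (intro arg_cong[where f=exp]) (simp add: field_simps)
  have e_le: "e k \<le> gs k * (\<mu> + 2 * q) / 2" for k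
  proof -
    have "gs k ^2 * Lam \<le> gs k * Lam" unfolding power2_eq_square
      using gle1[of k] gpos[of k] Lam_nn by (intro mult_right_mono) (auto simp: mult_le_cancel_left1)
    moreover have "gs k * (\<mu> + 2 * q) = gs k * Lam - gs k * lam / 2" by (simp add: mu' right_diff_distrib)
    moreover have "q * gs k = gs k * lam / 4" by (simp add: qlam)
    ultimately show ?thesis unfolding e_def by linarith
  qed
  have e_np: "e k \<le> 0" if kK: "K \<le> k" for k
  proof (cases "Lam = 0")
    case True then show ?thesis unfolding e_def using gpos[of k] lam_pos qlam by simp
  next
    case False
    then have Lp: "Lam > 0" using Lam_nn by simp
    define r where "r = Lam / (2 * q)"
    have rp: "r > 0" unfolding r_def qlam using Lp lam_pos by simp
    have K': "K = nat \<lceil>r powr (1 / \<gamma>)\<rceil>" unfolding K_def r_def Lam_def B_def lam_def[symmetric] Am_def[symmetric]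
      unfolding lam_def[symmetric] qlam by (simp add: algebra_simps)
    have "r powr (1/\<gamma>) \<le> real K" unfolding K' by linarith
    also have "\<dots> \<le> real k + 1" using kK by simp
    finally have "(r powr (1/\<gamma>)) powr \<gamma> \<le> (real k + 1) powr \<gamma>" using g by (intro powr_mono2) auto
    then have "r \<le> (real k + 1) powr \<gamma>" using g rp by (simp add: powr_powr powr_one)
    then have "gs k \<le> inverse r" unfolding gs_def powr_minus using rp by (intro le_imp_inverse_le) auto
    then have "gs k * Lam \<le> inverse r * Lam" using Lp by (simp add: mult_right_mono)
    also have "\<dots> = 2 * q" unfolding r_def using Lp by simp
    finally have "gs k * Lam \<le> 2 * q" .
    then have "gs k * (gs k * Lam / 2 - q) \<le> 0" using gpos[of k] by (simp add: mult_nonneg_nonpos)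
    then show ?thesis unfolding e_def by (simp add: algebra_simps power2_eq_square)
  qed
  have C1: "C \<ge> 1" unfolding C_def by simp
  show ?thesis
  proof (intro allI impI)
    fix i n :: nat assume "i \<le> n"
    have "(\<Prod>k=i..n. spec_norm (mat 1 - gs k *\<^sub>R X)) \<le> (\<Prod>k=i..n. exp (- q * gs k + e k))"
    proof (rule prod_mono)
      fix k assume "k \<in> {i..n}"
      have "0 \<le> spec_norm (mat 1 - gs k *\<^sub>R X)" unfolding spec_norm_def by (rule onorm_pos_le) simp
      moreover have "spec_norm (mat 1 - gs k *\<^sub>R X) \<le> exp (- q * gs k + e k)"
        using nb[of "gs k"] gpos[of k] bexp[of k] by (metis less_imp_le)
      ultimately show "0 \<le> spec_norm (mat 1 - gs k *\<^sub>R X) \<and> spec_norm (mat 1 - gs k *\<^sub>R X) \<le> exp (- q * gs k + e k)" by simp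
    qed
    also have "\<dots> = exp (\<Sum>k=i..n. - q * gs k + e k)"
      by (rule exp_sum[symmetric]) simp
    also have "\<dots> = exp (- q * (\<Sum>k=i..n. gs k)) * exp (\<Sum>k=i..n. e k)"
      by (simp only: sum.distrib sum_distrib_left[symmetric] exp_add mult_minus_left sum_negf)
    also have "\<dots> \<le> exp (- q * (\<Sum>k=i..n. gs k)) * C"
    proof (rule mult_left_mono)
      define S where "S = (\<Sum>l=i..min n K. gs l * (\<mu> + 2 * q))"
      have "(\<Sum>k=i..n. e k) \<le> (\<Sum>k=i..n. if k \<le> K then gs k * (\<mu> + 2 * q) / 2 else 0)"
        using e_le e_np by (intro sum_mono) (auto simp: not_le)
      also have "\<dots> = (\<Sum>k\<in>{k\<in>{i..n}. k \<le> K}. gs k * (\<mu> + 2 * q) / 2)"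
        by (rule sum.inter_filter[symmetric]) simp
      also have "{k\<in>{i..n}. k \<le> K} = {i..min n K}" by auto
      also have "(\<Sum>k\<in>{i..min n K}. gs k * (\<mu> + 2 * q) / 2) = S / 2"
        unfolding S_def by (simp add: sum_divide_distrib)
      finally have se: "(\<Sum>k=i..n. e k) \<le> S / 2" .
      show "exp (\<Sum>k=i..n. e k) \<le> C"
      proof (cases "i \<le> K")
        case False
        then have "S = 0" unfolding S_def by simp
        then have "(\<Sum>k=i..n. e k) \<le> 0" using se by simp
        then have "exp (\<Sum>k=i..n. e k) \<le> 1" by simp
        then show ?thesis using C1 by linarith
      next
        case True
        define P where "P = {(\<Prod>l=l1..l2. exp (gs l * (\<mu> + 2 * q))) | l1 l2. l1 \<le> l2 \<and> l2 \<le> K}"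
        have "P \<subseteq> (\<lambda>(l1,l2). (\<Prod>l=l1..l2. exp (gs l * (\<mu> + 2 * q)))) ` ({..K} \<times> {..K})"
          unfolding P_def by auto
        then have finP: "finite P" by (rule finite_subset) auto
        have "exp S \<in> P" unfolding P_def S_def exp_sum[OF finite_atLeastAtMost]
          using True \<open>i \<le> n\<close> by (intro CollectI exI[of _ i] exI[of _ "min n K"]) auto
        then have "exp S \<le> Max P" using finP by simp
        have "exp (S/2) = sqrt (exp S)"
        proof -
          have "exp S = (exp (S/2))^2" by (simp add: power2_eq_square flip: exp_add)
          then show ?thesis by simp
        qed
        also have "\<dots> \<le> sqrt (Max P)" using \<open>exp S \<le> Max P\<close> by simp
        also have "\<dots> \<le> C" unfolding C_def P_def by simp
        finally show ?thesis using se by (meson exp_le_cancel_iff order_trans)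
      qed
    qed simp
    finally show "(\<Prod>k=i..n. spec_norm (mat 1 - gs k *\<^sub>R X)) \<le> C * exp (- q * (\<Sum>k=i..n. gs k))"
      by (simp add: mult.commute)
  qed
qed

end
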